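(* Adaptive scale modularity is monotonic for all $M\ge 0$ and $\gamma\ge 2$: for every graph $G=(V,E)$, every clustering $C$ of $G$, and every $C$-consistent improvement $G'=(V,E')$ of $G$ (such that $Q_{M,\gamma}(G,C)$ and $Q_{M,\gamma}(G',C)$ are defined), $Q_{M,\gamma}(G',C)\ge Q_{M,\gamma}(G,C)$.
   Context: A (symmetric weighted) graph is a pair $G=(V,E)$ of a finite set $V$ and $E:V\times V\to\mathbb{R}_{\ge 0}$ symmetric; self loops allowed. A clustering is a partition of $V$ into nonempty disjoint clusters; write $i\sim_C j$ if $i,j$ lie in the same cluster of $C$. For $c\subseteq V$, $v_c=\sum_{i\in c}\sum_{j\in V}E(i,j)$ and $w_c=\sum_{i,j\in c}E(i,j)$. Adaptive scale modularity: $Q_{M,\gamma}(G,C)=\sum_{c\in C}\left(\frac{w_c}{M+\gamma v_c}-\left(\frac{v_c}{M+\gamma v_c}\right)^2\right)$, defined when all denominators are positive. A graph $G'=(V,E')$ is a $C$-consistent improvement of $G=(V,E)$ if $E'(i,j)\ge E(i,j)$ whenever $i\sim_C j$ and $E'(i,j)\le E(i,j)$ whenever $i\not\sim_C j$. *)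

theory Defs
  imports Complex_Main "HOL-Library.Disjoint_Sets"
begin

definition is_graph :: "'a set \<Rightarrow> ('a \<Rightarrow> 'a \<Rightarrow> real) \<Rightarrow> bool" where
  "is_graph V E \<longleftrightarrow> finite V \<and> (\<forall>i\<in>V. \<forall>j\<in>V. E i j \<ge> 0 \<and> E i j = E j i)"

definition is_clustering :: "'a set \<Rightarrow> 'a set set \<Rightarrow> bool" where
  "is_clustering V C \<longleftrightarrow> partition_on V C"

definition same_cluster :: "'a set set \<Rightarrow> 'a \<Rightarrow> 'a \<Rightarrow> bool" where
  "same_cluster C i j \<longleftrightarrow> (\<exists>c\<in>C. i \<in> c \<and> j \<in> c)"

definition vol :: "'a set \<Rightarrow> ('a \<Rightarrow> 'a \<Rightarrow> real) \<Rightarrow> 'a set \<Rightarrow> real" where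
  "vol V E c = (\<Sum>i\<in>c. \<Sum>j\<in>V. E i j)"

definition inner_weight :: "('a \<Rightarrow> 'a \<Rightarrow> real) \<Rightarrow> 'a set \<Rightarrow> real" where
  "inner_weight E c = (\<Sum>i\<in>c. \<Sum>j\<in>c. E i j)"

definition asm_quality :: "real \<Rightarrow> real \<Rightarrow> 'a set \<Rightarrow> ('a \<Rightarrow> 'a \<Rightarrow> real) \<Rightarrow> 'a set set \<Rightarrow> real" where
  "asm_quality M \<gamma> V E C =
     (\<Sum>c\<in>C. inner_weight E c / (M + \<gamma> * vol V E c) - (vol V E c / (M + \<gamma> * vol V E c))^2)"

definition asm_defined :: "real \<Rightarrow> real \<Rightarrow> 'a set \<Rightarrow> ('a \<Rightarrow> 'a \<Rightarrow> real) \<Rightarrow> 'a set set \<Rightarrow> bool" where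
  "asm_defined M \<gamma> V E C \<longleftrightarrow> (\<forall>c\<in>C. M + \<gamma> * vol V E c > 0)"

definition consistent_improvement ::
  "'a set \<Rightarrow> 'a set set \<Rightarrow> ('a \<Rightarrow> 'a \<Rightarrow> real) \<Rightarrow> ('a \<Rightarrow> 'a \<Rightarrow> real) \<Rightarrow> bool" where
  "consistent_improvement V C E E' \<longleftrightarrow>
     (\<forall>i\<in>V. \<forall>j\<in>V. (same_cluster C i j \<longrightarrow> E' i j \<ge> E i j) \<and>
                    (\<not> same_cluster C i j \<longrightarrow> E' i j \<le> E i j))"

end

theory Submission
  imports Defs
begin

definition FF :: "real \<Rightarrow> real \<Rightarrow> real \<Rightarrow> real \<Rightarrow> real" where
  "FF M g w b = w/(M+g*(w+b)) - ((w+b)/(M+g*(w+b)))^2"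

lemma lemA:
  fixes M g w w' b :: real
  assumes "M \<ge> 0" "g \<ge> 2" "b \<ge> 0" "0 \<le> w" "w \<le> w'" "M + g*(w+b) > 0"
  shows "FF M g w b \<le> FF M g w' b"
proof -
  define v where "v = w+b"
  define v' where "v' = w'+b"
  define D where "D = M+g*v"
  define D' where "D' = M+g*v'"
  have D: "D > 0" using assms D_def v_def by simp
  have vv: "0 \<le> v" "v \<le> v'" using assms v_def v'_def by auto
  have DD: "D \<le> D'" using vv assms D_def D'_def by (simp add: mult_left_mono)
  have D': "D' > 0" using D DD by simp
  define x where "x = v/D"
  define x' where "x' = v'/D'"
  have e1: "FF M g w b = x - x^2 - b/D"
  proof -
    have "w/D = v/D - b/D" unfolding v_def by (metis add_diff_cancel_right' diff_divide_distrib)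
    thus ?thesis unfolding FF_def x_def D_def v_def by simp
  qed
  have e2: "FF M g w' b = x' - x'^2 - b/D'"
  proof -
    have "w'/D' = v'/D' - b/D'" unfolding v'_def by (metis add_diff_cancel_right' diff_divide_distrib)
    thus ?thesis unfolding FF_def x'_def D'_def v'_def by simp
  qed
  have x0: "0 \<le> x" using vv D x_def by simp
  have xx: "x \<le> x'"
  proof -
    have "v*D' \<le> v'*D" unfolding D_def D'_def using vv assms
      by (simp add: algebra_simps mult_left_mono)
    thus ?thesis unfolding x_def x'_def using D D' by (simp add: divide_simps mult.commute)
  qed
  have xh: "x' \<le> 1/2"
  proof -
    have "g*v' \<le> D'" using D'_def assms by simp
    moreover have "2*v' \<le> g*v'" using assms vv by (intro mult_right_mono) auto
    ultimately have "2*v' \<le> D'" by linarith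
    thus ?thesis unfolding x'_def using D' by (simp add: divide_simps)
  qed
  have q: "x - x^2 \<le> x' - x'^2"
  proof -
    have "(x'-x)*(1 - x - x') \<ge> 0" using xx xh x0 by (intro mult_nonneg_nonneg) auto
    thus ?thesis by (simp add: algebra_simps power2_eq_square)
  qed
  have "b/D' \<le> b/D" using D DD assms by (simp add: frac_le)
  thus ?thesis using e1 e2 q by simp
qed

lemma lemB:
  fixes M g w b b' :: real
  assumes "M \<ge> 0" "g \<ge> 2" "0 \<le> b'" "b' \<le> b" "0 \<le> w" "M + g*(w+b') > 0"
  shows "FF M g w b \<le> FF M g w b'"
proof -
  define v where "v = w+b"
  define v' where "v' = w+b'"
  define D where "D = M+g*v"
  define D' where "D' = M+g*v'"
  have D': "D' > 0" using assms D'_def v'_def by simp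
  have vv: "0 \<le> v'" "v' \<le> v" using assms v_def v'_def by auto
  have DD: "D' \<le> D" using vv assms D_def D'_def by (simp add: mult_left_mono)
  have D: "D > 0" using D' DD by simp
  have t1: "w/D \<le> w/D'" using D' DD assms by (simp add: frac_le)
  have t2: "v'/D' \<le> v/D"
  proof -
    have "v'*D \<le> v*D'" unfolding D_def D'_def using vv assms
      by (simp add: algebra_simps mult_left_mono)
    thus ?thesis using D D' by (simp add: divide_simps mult.commute)
  qed
  have "(v'/D')^2 \<le> (v/D)^2" using t2 vv D' by (intro power_mono) auto
  thus ?thesis unfolding FF_def using t1 v_def v'_def D_def D'_def by simp
qed

theorem theorem6:
  fixes M \<gamma> :: real and V :: "'a set" and E E' :: "'a \<Rightarrow> 'a \<Rightarrow> real" and C :: "'a set set"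
  assumes "M \<ge> 0" and "\<gamma> \<ge> 2"
    and "is_graph V E" and "is_graph V E'"
    and "is_clustering V C"
    and "consistent_improvement V C E E'"
    and "asm_defined M \<gamma> V E C" and "asm_defined M \<gamma> V E' C"
  shows "asm_quality M \<gamma> V E' C \<ge> asm_quality M \<gamma> V E C"
proof -
  have fin: "finite V" using assms(3) by (simp add: is_graph_def)
  have part: "partition_on V C" using assms(5) by (simp add: is_clustering_def)
  have ci1: "E i j \<le> E' i j" if "i \<in> V" "j \<in> V" "same_cluster C i j" for i j
    using assms(6) that unfolding consistent_improvement_def by blast
  have ci2: "E' i j \<le> E i j" if "i \<in> V" "j \<in> V" "\<not> same_cluster C i j" for i j
    using assms(6) that unfolding consistent_improvement_def by blast
  have key: "FF M \<gamma> (inner_weight E c) (vol V E c - inner_weight E c)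
           \<le> FF M \<gamma> (inner_weight E' c) (vol V E' c - inner_weight E' c)" if c: "c \<in> C" for c
  proof -
    have cV: "c \<subseteq> V" using part c by (auto simp: partition_on_def)
    have finc: "finite c" using cV fin finite_subset by blast
    have bE: "vol V F c - inner_weight F c = (\<Sum>i\<in>c. \<Sum>j\<in>V-c. F i j)" for F :: "'a \<Rightarrow> 'a \<Rightarrow> real"
    proof -
      have "(\<Sum>j\<in>V. F i j) = (\<Sum>j\<in>c. F i j) + (\<Sum>j\<in>V-c. F i j)" for i
        using sum.subset_diff[OF cV fin, of "F i"] by linarith
      thus ?thesis unfolding vol_def inner_weight_def by (simp add: sum.distrib)
    qed
    have same: "same_cluster C i j" if "i \<in> c" "j \<in> c" for i j
      unfolding same_cluster_def using that c by blast
    have notsame: "\<not> same_cluster C i j" if "i \<in> c" "j \<in> V - c" for i j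
    proof
      assume "same_cluster C i j"
      then obtain d where d: "d \<in> C" "i \<in> d" "j \<in> d" by (auto simp: same_cluster_def)
      have dis: "disjoint C" using part by (rule partition_onD2)
      have "d = c"
      proof (rule ccontr)
        assume "d \<noteq> c"
        hence "d \<inter> c = {}" using disjointD[OF dis d(1) c] by blast
        thus False using d that by blast
      qed
      thus False using d that by auto
    qed
    have ww: "inner_weight E c \<le> inner_weight E' c"
      unfolding inner_weight_def
      using ci1 same cV by (intro sum_mono) blast
    have w0: "0 \<le> inner_weight E c"
      unfolding inner_weight_def using assms(3) cV by (intro sum_nonneg) (auto simp: is_graph_def)
    have bb: "vol V E' c - inner_weight E' c \<le> vol V E c - inner_weight E c"
      unfolding bE
      using ci2 notsame cV by (intro sum_mono) blast
    have b0: "0 \<le> vol V E' c - inner_weight E' c" unfolding bE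
      using assms(4) cV by (intro sum_nonneg) (auto simp: is_graph_def)
    have b0': "0 \<le> vol V E c - inner_weight E c" unfolding bE
      using assms(3) cV by (intro sum_nonneg) (auto simp: is_graph_def)
    have D: "M + \<gamma> * (inner_weight E c + (vol V E c - inner_weight E c)) > 0"
      using assms(7) c by (simp add: asm_defined_def)
    have D': "M + \<gamma> * (inner_weight E' c + (vol V E' c - inner_weight E' c)) > 0"
      using assms(8) c by (simp add: asm_defined_def)
    have "FF M \<gamma> (inner_weight E c) (vol V E c - inner_weight E c)
       \<le> FF M \<gamma> (inner_weight E' c) (vol V E c - inner_weight E c)"
      using lemA[OF assms(1,2) b0' w0 ww D] .
    also have "\<dots> \<le> FF M \<gamma> (inner_weight E' c) (vol V E' c - inner_weight E' c)"
      using lemB[OF assms(1,2) b0 bb _ D'] w0 ww by simp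
    finally show ?thesis .
  qed
  have eq: "asm_quality M \<gamma> V F C = (\<Sum>c\<in>C. FF M \<gamma> (inner_weight F c) (vol V F c - inner_weight F c))"
    for F :: "'a \<Rightarrow> 'a \<Rightarrow> real"
    unfolding asm_quality_def FF_def by simp
  show ?thesis unfolding eq by (intro sum_mono key)
qed

end
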